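(* Let $d,k$ be integers with $2 \leq d \leq \frac{k+1}{2}$, let $\Sigma_k=\{\sigma_1,\ldots,\sigma_k\}$ and $\Sigma_d=\{\sigma_1,\ldots,\sigma_d\}$. Consider two users over the alphabet $\Sigma_k$, where user 1 has confusion graph $G_1=(\Sigma_k,\{ab \mid a\in\Sigma_k,\ b\in\Sigma_k\setminus\Sigma_d,\ a\neq b\})$ and user 2 has the complement confusion graph $G_2=\overline{G_1}=(\Sigma_k,\{ab\mid a,b\in\Sigma_d,\ a\neq b\})$. Then for every $\alpha\in[0,1]$ the rate vector $(\alpha\log_2 d,\ (1-\alpha)\log_2(k-d+1))$ is optimal.
   Context: Setting: a sender broadcasts a word of length $n$ over a finite alphabet $\Sigma$ to $r$ users; user $i$ has a confusion graph $G_i$ on vertex set $\Sigma$, where $ab$ is an edge iff user $i$ cannot distinguish letters $a$ and $b$. Two words $x,y\in\Sigma^n$ are distinguishable by user $i$ if there is a coordinate $t$ with $x_t\neq y_t$ and $x_ty_t$ not an edge of $G_i$. A vector $(m_1,\ldots,m_r)$ of positive integers is feasible for length $n$ if there is a map $E:[m_1]\times\cdots\times[m_r]\to\Sigma^n$ such that for every $i$ and all tuples $a,a'$ with $a_i\neq a'_i$, the words $E(a)$ and $E(a')$ are distinguishable by user $i$. A rate vector $(R_1,\ldots,R_r)$ is feasible if there is a sequence of feasible vectors $(m_1^{(n)},\ldots,m_r^{(n)})$ for lengths $n\to\infty$ with $R_i=\lim_{n\to\infty}\frac{\log_2 m_i^{(n)}}{n}$ for all $i$. For two users, a rate vector is optimal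 if it is feasible and no user can increase his rate while the other user keeps the same rate. *)

theory Defs
  imports Complex_Main
begin

text \<open>Users are indexed 0..r-1; message tuples are functions a :: nat => nat with
  a i < m i for i < r (i.e. [m_i] = {0..<m_i}) and a i = 0 for i >= r.\<close>

definition words :: "'a set \<Rightarrow> nat \<Rightarrow> 'a list set" where
  "words Alph n = {x. length x = n \<and> set x \<subseteq> Alph}"

definition distinguishable :: "('a \<Rightarrow> 'a \<Rightarrow> bool) \<Rightarrow> 'a list \<Rightarrow> 'a list \<Rightarrow> bool" where
  "distinguishable G x y \<longleftrightarrow>
     (\<exists>t < min (length x) (length y). x ! t \<noteq> y ! t \<and> \<not> G (x ! t) (y ! t))"

definition msg_tuples :: "nat \<Rightarrow> (nat \<Rightarrow> nat) \<Rightarrow> (nat \<Rightarrow> nat) set" where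
  "msg_tuples r m = {a. (\<forall>i<r. a i < m i) \<and> (\<forall>i\<ge>r. a i = 0)}"

definition feasible_vector ::
  "'a set \<Rightarrow> (nat \<Rightarrow> 'a \<Rightarrow> 'a \<Rightarrow> bool) \<Rightarrow> nat \<Rightarrow> nat \<Rightarrow> (nat \<Rightarrow> nat) \<Rightarrow> bool" where
  "feasible_vector Alph G r n m \<longleftrightarrow>
     (\<forall>i<r. m i \<ge> 1) \<and>
     (\<exists>E. (\<forall>a\<in>msg_tuples r m. E a \<in> words Alph n) \<and>
          (\<forall>i<r. \<forall>a\<in>msg_tuples r m. \<forall>a'\<in>msg_tuples r m.
              a i \<noteq> a' i \<longrightarrow> distinguishable (G i) (E a) (E a')))"

definition feasible_rate ::
  "'a set \<Rightarrow> (nat \<Rightarrow> 'a \<Rightarrow> 'a \<Rightarrow> bool) \<Rightarrow> nat \<Rightarrow> (nat \<Rightarrow> real) \<Rightarrow> bool" where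
  "feasible_rate Alph G r R \<longleftrightarrow>
     (\<exists>m :: nat \<Rightarrow> nat \<Rightarrow> nat.
        (\<forall>\<^sub>F n in sequentially. feasible_vector Alph G r n (m n)) \<and>
        (\<forall>i<r. (\<lambda>n. log 2 (real (m n i)) / real n) \<longlonglongrightarrow> R i))"

definition two_users :: "('a \<Rightarrow> 'a \<Rightarrow> bool) \<Rightarrow> ('a \<Rightarrow> 'a \<Rightarrow> bool) \<Rightarrow> nat \<Rightarrow> 'a \<Rightarrow> 'a \<Rightarrow> bool" where
  "two_users G1 G2 = (\<lambda>i. if i = 0 then G1 else G2)"

definition rate2 :: "real \<Rightarrow> real \<Rightarrow> nat \<Rightarrow> real" where
  "rate2 R1 R2 = (\<lambda>i. if i = 0 then R1 else R2)"

definition optimal2 ::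
  "'a set \<Rightarrow> ('a \<Rightarrow> 'a \<Rightarrow> bool) \<Rightarrow> ('a \<Rightarrow> 'a \<Rightarrow> bool) \<Rightarrow> real \<Rightarrow> real \<Rightarrow> bool" where
  "optimal2 Alph G1 G2 R1 R2 \<longleftrightarrow>
     feasible_rate Alph (two_users G1 G2) 2 (rate2 R1 R2) \<and>
     \<not> (\<exists>R1'. R1' > R1 \<and> feasible_rate Alph (two_users G1 G2) 2 (rate2 R1' R2)) \<and>
     \<not> (\<exists>R2'. R2' > R2 \<and> feasible_rate Alph (two_users G1 G2) 2 (rate2 R1 R2'))"

text \<open>Alphabet Sigma_k = {1..k} (sigma_i represented by i), Sigma_d = {1..d}.\<close>

definition G1_graph :: "nat \<Rightarrow> nat \<Rightarrow> nat \<Rightarrow> nat \<Rightarrow> bool" where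
  "G1_graph k d a b \<longleftrightarrow> a \<in> {1..k} \<and> b \<in> {1..k} \<and> a \<noteq> b \<and>
      (a \<in> {1..k} - {1..d} \<or> b \<in> {1..k} - {1..d})"

definition G2_graph :: "nat \<Rightarrow> nat \<Rightarrow> nat \<Rightarrow> bool" where
  "G2_graph d a b \<longleftrightarrow> a \<in> {1..d} \<and> b \<in> {1..d} \<and> a \<noteq> b"

end

theory Submission
  imports Defs "HOL-Analysis.Analysis"
begin

lemma powr_neg_convex:
  fixes g :: real assumes "0 < g" "g \<le> 1"
  shows "convex_on {0<..} (\<lambda>x. - (x powr g))"
proof (rule f''_ge0_imp_convex[where f' = "\<lambda>x. - (g * x powr (g - 1))"
      and f'' = "\<lambda>x. - (g * ((g - 1) * x powr (g - 1 - 1)))"])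
  show "convex ({0<..} :: real set)" by simp
  fix x :: real assume x: "x \<in> {0<..}"
  show "((\<lambda>x. - (x powr g)) has_real_derivative - (g * x powr (g - 1))) (at x)"
    using x by (auto intro!: derivative_eq_intros)
  show "((\<lambda>x. - (g * x powr (g - 1))) has_real_derivative - (g * ((g - 1) * x powr (g - 1 - 1)))) (at x)"
    using x by (auto intro!: derivative_eq_intros)
  have "g * ((1 - g) * x powr (g - 1 - 1)) \<ge> 0" using assms x by simp
  then show "0 \<le> - (g * ((g - 1) * x powr (g - 1 - 1)))" by (simp add: algebra_simps)
qed

lemma powr_subadd:
  fixes g t c :: real assumes "0 < g" "g \<le> 1" "0 \<le> t" "0 \<le> c"
  shows "(t + c) powr g \<le> t powr g + c powr g"
proof (cases "t + c = 0")
  case True then show ?thesis using assms by simp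
next
  case False
  then have p: "t + c > 0" using assms by simp
  have h: "y \<le> y powr g" if "0 \<le> y" "y \<le> 1" for y :: real
  proof (cases "y = 0")
    case True then show ?thesis by simp
  next
    case False
    then have "y powr 1 \<le> y powr g" using that assms by (intro powr_mono') auto
    then show ?thesis using that by simp
  qed
  have "t / (t + c) \<le> (t / (t + c)) powr g" using assms p by (intro h) auto
  moreover have "c / (t + c) \<le> (c / (t + c)) powr g" using assms p by (intro h) auto
  moreover have "t / (t + c) + c / (t + c) = 1" using p by (simp add: add_divide_distrib[symmetric])
  ultimately have "1 \<le> (t / (t + c)) powr g + (c / (t + c)) powr g"
    by linarith
  also have "\<dots> = (t powr g + c powr g) / (t + c) powr g"
    using assms p by (simp add: powr_divide add_divide_distrib)
  finally show ?thesis using p by (simp add: field_simps)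
qed

lemma gmono:
  fixes g s t c :: real assumes "0 < g" "g \<le> 1" "0 \<le> s" "s \<le> t" "0 \<le> c"
  shows "(t + c) powr g - t powr g \<le> (s + c) powr g - s powr g"
proof (cases "s = 0")
  case True then show ?thesis using powr_subadd[of g t c] assms by simp
next
  case False
  then have s: "s > 0" using assms by simp
  show ?thesis
  proof (cases "t - s + c = 0")
    case True then have "t = s" "c = 0" using assms by auto
    then show ?thesis by simp
  next
    case False
    then have D: "t - s + c > 0" using assms by simp
    define l where "l = (t - s) / (t - s + c)"
    have l0: "0 \<le> l" "l \<le> 1" using assms D by (auto simp: l_def)
    have cv: "convex_on {0<..} (\<lambda>x. - (x powr g))" using powr_neg_convex assms by simp
    have ll: "l * (t - s + c) = t - s" using D by (simp add: l_def)
    have e1: "(1 - l) *\<^sub>R (t + c) + l *\<^sub>R s = s + c"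
      using ll by (simp add: algebra_simps)
    then have e1': "(1 - l) * (t + c) + l * s = s + c" by simp
    have e2: "(1 - l) *\<^sub>R s + l *\<^sub>R (t + c) = t"
      using ll by (simp add: algebra_simps)
    then have e2': "(1 - l) * s + l * (t + c) = t" by simp
    have "- ((s + c) powr g) \<le> (1 - l) * - ((t + c) powr g) + l * - (s powr g)"
      using convex_onD[OF cv, of l "t + c" s] l0 s assms by (simp add: e1')
    moreover have "- (t powr g) \<le> (1 - l) * - (s powr g) + l * - ((t + c) powr g)"
      using convex_onD[OF cv, of l s "t + c"] l0 s assms by (simp add: e2')
    ultimately show ?thesis by (simp add: algebra_simps)
  qed
qed

lemma step1:
  fixes u :: "nat \<Rightarrow> real" and b g :: real
  assumes "finite S" "S \<noteq> {}" "\<And>v. v \<in> S \<Longrightarrow> b \<le> u v" "0 \<le> b" "0 < g" "g \<le> 1"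
  shows "(sum u S - (real (card S) - 1) * b) powr g + (real (card S) - 1) * b powr g
          \<le> (\<Sum>v\<in>S. u v powr g)"
  using assms(1,2,3)
proof (induction S rule: finite_ne_induct)
  case (singleton x) then show ?case by simp
next
  case (insert x F)
  have IH: "(sum u F - (real (card F) - 1) * b) powr g + (real (card F) - 1) * b powr g
          \<le> (\<Sum>v\<in>F. u v powr g)" using insert by auto
  have "real (card F) * b \<le> sum u F"
    using insert sum_mono[of F "\<lambda>_. b" u] by auto
  then have Xb: "b \<le> sum u F - (real (card F) - 1) * b" by (simp add: algebra_simps)
  have ux: "b \<le> u x" using insert by auto
  have g: "(sum u F - (real (card F) - 1) * b + (u x - b)) powr g - (sum u F - (real (card F) - 1) * b) powr g
      \<le> (b + (u x - b)) powr g - b powr g"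
    using gmono[OF assms(5,6) assms(4) Xb, of "u x - b"] ux by simp
  have e: "sum u (insert x F) - (real (card (insert x F)) - 1) * b
      = sum u F - (real (card F) - 1) * b + (u x - b)"
    using insert by (simp add: algebra_simps)
  have e2: "real (card (insert x F)) - 1 = real (card F)" using insert by simp
  show ?case unfolding e e2 using IH g insert by (simp add: algebra_simps)
qed

lemma key_real:
  fixes u :: "nat \<Rightarrow> real" and b g q :: real and d :: nat
  assumes "finite S" "card S = d" "d \<ge> 1" "\<And>v. v \<in> S \<Longrightarrow> b \<le> u v" "0 \<le> b" "0 < g" "g \<le> 1"
    "q \<ge> 1" "q powr g = real d"
  shows "(sum u S + (q - real d) * b) powr g \<le> (\<Sum>v\<in>S. u v powr g)"
proof -
  have ne: "S \<noteq> {}" using assms by auto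
  have s1: "(sum u S - (real (card S) - 1) * b) powr g + (real (card S) - 1) * b powr g
          \<le> (\<Sum>v\<in>S. u v powr g)" by (rule step1) (use assms ne in auto)
  have "real (card S) * b \<le> sum u S"
    using assms sum_mono[of S "\<lambda>_. b" u] by auto
  then have Xb: "b \<le> sum u S - (real d - 1) * b" using assms(2) by (simp add: algebra_simps)
  have g: "(sum u S - (real d - 1) * b + (q - 1) * b) powr g - (sum u S - (real d - 1) * b) powr g
     \<le> (b + (q - 1) * b) powr g - b powr g"
    using gmono[OF assms(6,7,5) Xb, of "(q - 1) * b"] assms by simp
  have "(b + (q - 1) * b) powr g = (q * b) powr g" by (simp add: algebra_simps)
  also have "\<dots> = real d * b powr g" using assms by (simp add: powr_mult)
  finally have h: "(b + (q - 1) * b) powr g = real d * b powr g" .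
  have e: "sum u S - (real d - 1) * b + (q - 1) * b = sum u S + (q - real d) * b"
    by (simp add: algebra_simps)
  show ?thesis using s1 g h e assms(2) by (simp add: algebra_simps)
qed

fun cov :: "nat \<Rightarrow> nat list \<Rightarrow> nat list \<Rightarrow> bool" where
  "cov d [] [] = True"
| "cov d (v#z) (c#x) = ((1 \<le> v \<and> v \<le> d) \<and> ((1 \<le> c \<and> c \<le> d) \<longrightarrow> v = c) \<and> cov d z x)"
| "cov d _ _ = False"

definition sh :: "nat \<Rightarrow> nat list set \<Rightarrow> nat list set" where
  "sh d T = {z. \<exists>x\<in>T. cov d z x}"

definition phi :: "nat \<Rightarrow> nat \<Rightarrow> nat" where
  "phi d c = (if 1 \<le> c \<and> c \<le> d then 0 else c)"

lemma cov_words: "cov d z x \<Longrightarrow> z \<in> words {1..d} (length x)"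
  by (induction d z x rule: cov.induct) (auto simp: words_def)

lemma finite_words: "finite A \<Longrightarrow> finite (words A n)"
proof -
  assume "finite A"
  then have "finite {xs. set xs \<subseteq> A \<and> length xs = n}" by (rule finite_lists_length_eq)
  moreover have "words A n = {xs. set xs \<subseteq> A \<and> length xs = n}" by (auto simp: words_def)
  ultimately show ?thesis by simp
qed

lemma sh_words: "T \<subseteq> words A n \<Longrightarrow> sh d T \<subseteq> words {1..d} n"
  using cov_words by (fastforce simp: sh_def words_def)

lemma finite_sh: "T \<subseteq> words A n \<Longrightarrow> finite (sh d T)"
  by (rule finite_subset[OF sh_words finite_words]) auto

lemma words_Suc: "x \<in> words A (Suc n) \<longleftrightarrow> (\<exists>c y. x = c # y \<and> c \<in> A \<and> y \<in> words A n)"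
  by (cases x) (auto simp: words_def)

lemma words_0: "words A 0 = {[]}" by (auto simp: words_def)

lemma cov_Nil: "cov d z [] \<longleftrightarrow> z = []" by (cases z) auto

lemma shadow_bound:
  fixes g q :: real and d k :: nat
  assumes g: "0 < g" "g \<le> 1" and q: "q = real k - real d + 1" "q powr g = real d"
    and dk: "1 \<le> d" "d \<le> k"
  shows "T \<subseteq> words {1..k} n \<Longrightarrow> real (card (map (phi d) ` T)) powr g \<le> real (card (sh d T))"
proof (induction n arbitrary: T)
  case 0
  then have "T = {} \<or> T = {[]}" by (auto simp: words_0)
  then show ?case
  proof
    assume "T = {}" then show ?thesis by (simp add: sh_def)
  next
    assume T: "T = {[]}"
    have "sh d T = {[]}" unfolding T sh_def by (auto simp: cov_Nil)
    then show ?thesis using T by simp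
  qed
next
  case (Suc n)
  define Tv where "Tv v = {x. v # x \<in> T}" for v
  define Ov where "Ov = {x. \<exists>c. c # x \<in> T \<and> \<not> (1 \<le> c \<and> c \<le> d)}"
  define U where "U v = Tv v \<union> Ov" for v
  have TW: "\<And>x. x \<in> T \<Longrightarrow> \<exists>c y. x = c # y \<and> c \<in> {1..k} \<and> y \<in> words {1..k} n"
  proof -
    fix x assume "x \<in> T"
    then have "x \<in> words {1..k} (Suc n)" using Suc.prems by blast
    then show "\<exists>c y. x = c # y \<and> c \<in> {1..k} \<and> y \<in> words {1..k} n" by (simp only: words_Suc)
  qed
  have UW: "U v \<subseteq> words {1..k} n" for v
    using TW by (auto simp: U_def Tv_def Ov_def)
  have finU: "finite (U v)" for v by (rule finite_subset[OF UW finite_words]) auto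
  have shT: "sh d T = (\<Union>v\<in>{1..d}. Cons v ` sh d (U v))"
  proof
    show "sh d T \<subseteq> (\<Union>v\<in>{1..d}. Cons v ` sh d (U v))"
    proof
      fix z assume "z \<in> sh d T"
      then obtain x where x: "x \<in> T" "cov d z x" by (auto simp: sh_def)
      obtain c y where xy: "x = c # y" using TW x(1) by blast
      obtain v z' where zz: "z = v # z'" using x(2) xy by (cases z) auto
      have cv: "1 \<le> v" "v \<le> d" "(1 \<le> c \<and> c \<le> d) \<longrightarrow> v = c" "cov d z' y" using x(2) xy zz by auto
      have "y \<in> U v" using cv x(1) xy by (cases "1 \<le> c \<and> c \<le> d") (auto simp: U_def Tv_def Ov_def)
      then have "z' \<in> sh d (U v)" using cv by (auto simp: sh_def)
      then show "z \<in> (\<Union>v\<in>{1..d}. Cons v ` sh d (U v))" using zz cv by auto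
    qed
  next
    show "(\<Union>v\<in>{1..d}. Cons v ` sh d (U v)) \<subseteq> sh d T"
    proof
      fix z assume "z \<in> (\<Union>v\<in>{1..d}. Cons v ` sh d (U v))"
      then obtain v z' where vz: "v \<in> {1..d}" "z = v # z'" "z' \<in> sh d (U v)" by auto
      then obtain y where y: "y \<in> U v" "cov d z' y" by (auto simp: sh_def)
      show "z \<in> sh d T"
      proof (cases "y \<in> Tv v")
        case True
        then have "v # y \<in> T" by (simp add: Tv_def)
        moreover have "cov d z (v # y)" using vz y by auto
        ultimately show ?thesis by (auto simp: sh_def)
      next
        case False
        then obtain c where "c # y \<in> T" "\<not> (1 \<le> c \<and> c \<le> d)" using y by (auto simp: U_def Ov_def)
        moreover have "cov d z (c # y)" using vz y calculation by auto
        ultimately show ?thesis by (auto simp: sh_def)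
      qed
    qed
  qed
  have cardsh: "card (sh d T) = (\<Sum>v\<in>{1..d}. card (sh d (U v)))"
  proof -
    have "card (\<Union>v\<in>{1..d}. Cons v ` sh d (U v)) = (\<Sum>v\<in>{1..d}. card (Cons v ` sh d (U v)))"
      by (rule card_UN_disjoint) (use finite_sh[OF UW] in auto)
    also have "\<dots> = (\<Sum>v\<in>{1..d}. card (sh d (U v)))"
      by (intro sum.cong refl card_image) (auto simp: inj_on_def)
    finally show ?thesis using shT by simp
  qed
  define A where "A v = map (phi d) ` Tv v" for v
  define B where "B = map (phi d) ` Ov"
  have finB: "finite B" unfolding B_def using finU[of 1] by (auto simp: U_def)
  have finA: "finite (A v)" for v unfolding A_def using finU[of v] by (auto simp: U_def)
  have sub: "map (phi d) ` T \<subseteq> Cons 0 ` (\<Union>v\<in>{1..d}. A v) \<union> (\<Union>c\<in>{d+1..k}. Cons c ` B)"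
  proof
    fix w assume "w \<in> map (phi d) ` T"
    then obtain x where x: "x \<in> T" "w = map (phi d) x" by auto
    then obtain c y where cy: "x = c # y" "c \<in> {1..k}" using TW by blast
    show "w \<in> Cons 0 ` (\<Union>v\<in>{1..d}. A v) \<union> (\<Union>c\<in>{d+1..k}. Cons c ` B)"
    proof (cases "1 \<le> c \<and> c \<le> d")
      case True
      then have "map (phi d) y \<in> A c" using x cy by (auto simp: A_def Tv_def)
      then have "map (phi d) y \<in> (\<Union>v\<in>{1..d}. A v)" using True by auto
      moreover have "w = 0 # map (phi d) y" using True x cy by (simp add: phi_def)
      ultimately show ?thesis by blast
    next
      case False
      then have "map (phi d) y \<in> B" "c \<in> {d+1..k}" using x cy by (auto simp: B_def Ov_def)
      then show ?thesis using False x cy by (auto simp: phi_def)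
    qed
  qed
  have cb: "card (map (phi d) ` T) \<le> card (\<Union>v\<in>{1..d}. A v) + (k - d) * card B"
  proof -
    have "card (map (phi d) ` T) \<le> card (Cons 0 ` (\<Union>v\<in>{1..d}. A v) \<union> (\<Union>c\<in>{d+1..k}. Cons c ` B))"
      by (rule card_mono[OF _ sub]) (use finA finB in auto)
    also have "\<dots> \<le> card (Cons 0 ` (\<Union>v\<in>{1..d}. A v)) + card (\<Union>c\<in>{d+1..k}. Cons c ` B)"
      by (rule card_Un_le)
    also have "card (Cons 0 ` (\<Union>v\<in>{1..d}. A v)) \<le> card (\<Union>v\<in>{1..d}. A v)"
      by (rule card_image_le) (use finA in auto)
    also have "card (\<Union>c\<in>{d+1..k}. Cons c ` B) \<le> (\<Sum>c\<in>{d+1..k}. card (Cons c ` B))"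
      by (rule card_UN_le) simp
    also have "\<dots> \<le> (\<Sum>c\<in>{d+1..k}. card B)"
      by (intro sum_mono card_image_le finB)
    also have "\<dots> = (k - d) * card B" by simp
    finally show ?thesis by simp
  qed
  have UAB: "map (phi d) ` U v = A v \<union> B" for v by (auto simp: U_def A_def B_def)
  have cu: "card B \<le> card (A v \<union> B)" for v by (rule card_mono) (use finA finB in auto)
  have cA: "card (\<Union>v\<in>{1..d}. A v) \<le> card B + (\<Sum>v\<in>{1..d}. card (A v \<union> B) - card B)"
  proof -
    have "(\<Union>v\<in>{1..d}. A v) \<subseteq> B \<union> (\<Union>v\<in>{1..d}. (A v \<union> B) - B)" by auto
    then have "card (\<Union>v\<in>{1..d}. A v) \<le> card (B \<union> (\<Union>v\<in>{1..d}. (A v \<union> B) - B))"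
      by (rule card_mono[rotated]) (use finA finB in auto)
    also have "\<dots> \<le> card B + card (\<Union>v\<in>{1..d}. (A v \<union> B) - B)" by (rule card_Un_le)
    also have "card (\<Union>v\<in>{1..d}. (A v \<union> B) - B) \<le> (\<Sum>v\<in>{1..d}. card ((A v \<union> B) - B))"
      by (rule card_UN_le) simp
    also have "\<dots> = (\<Sum>v\<in>{1..d}. card (A v \<union> B) - card B)"
      by (intro sum.cong refl card_Diff_subset) (use finB in auto)
    finally show ?thesis by simp
  qed
  define u where "u v = real (card (A v \<union> B))" for v
  define b where "b = real (card B)"
  have ub: "b \<le> u v" for v using cu by (simp add: u_def b_def)
  have N: "real (card (map (phi d) ` T)) \<le> sum u {1..d} + (q - real d) * b"
  proof -
    have r1: "real (card (\<Union>v\<in>{1..d}. A v)) \<le> b + (\<Sum>v\<in>{1..d}. u v - b)"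
    proof -
      have "real (card (\<Union>v\<in>{1..d}. A v)) \<le> real (card B + (\<Sum>v\<in>{1..d}. card (A v \<union> B) - card B))"
        using cA by linarith
      also have "\<dots> = b + (\<Sum>v\<in>{1..d}. u v - b)"
        using cu by (simp add: b_def u_def of_nat_diff)
      finally show ?thesis .
    qed
    have "(\<Sum>v\<in>{1..d}. u v - b) = sum u {1..d} - real d * b" by (simp add: sum_subtractf)
    moreover have "real (card (map (phi d) ` T)) \<le> real (card (\<Union>v\<in>{1..d}. A v)) + real (k - d) * b"
      using cb unfolding b_def by (metis of_nat_add of_nat_le_iff of_nat_mult)
    moreover have "b * q = b * real k - b * real d + b" unfolding q(1) by (simp add: algebra_simps)
    ultimately show ?thesis using r1 dk by (simp add: of_nat_diff algebra_simps)
  qed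
  have "real (card (map (phi d) ` T)) powr g \<le> (sum u {1..d} + (q - real d) * b) powr g"
    using N g by (intro powr_mono2) auto
  also have "\<dots> \<le> (\<Sum>v\<in>{1..d}. u v powr g)"
  proof (rule key_real)
    show "1 \<le> q" using q dk by simp
  qed (use g q dk ub in \<open>auto simp: b_def\<close>)
  also have "\<dots> \<le> (\<Sum>v\<in>{1..d}. real (card (sh d (U v))))"
    using Suc.IH[OF UW] UAB by (intro sum_mono) (auto simp: u_def)
  also have "\<dots> = real (card (sh d T))" using cardsh by simp
  finally show ?case .
qed

lemma cov_nth: "cov d z x \<Longrightarrow> length z = length x \<and> (\<forall>t<length x. 1 \<le> x!t \<and> x!t \<le> d \<longrightarrow> z!t = x!t)"
proof (induction d z x rule: cov.induct)
  case (2 d v z c x)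
  then show ?case by (auto simp: nth_Cons split: nat.splits)
qed auto

lemma words_nth: "x \<in> words A n \<Longrightarrow> t < n \<Longrightarrow> x ! t \<in> A"
  by (auto simp: words_def)

lemma dist2_phi:
  assumes "x \<in> words {1..k} n" "y \<in> words {1..k} n" "distinguishable (G2_graph d) x y"
  shows "map (phi d) x \<noteq> map (phi d) y"
proof
  assume eq: "map (phi d) x = map (phi d) y"
  obtain t where t: "t < min (length x) (length y)" "x ! t \<noteq> y ! t" "\<not> G2_graph d (x ! t) (y ! t)"
    using assms(3) by (auto simp: distinguishable_def)
  have "phi d (x ! t) = phi d (y ! t)" using eq t(1) by (metis min.strict_boundedE nth_map)
  moreover have "x ! t \<in> set x" "y ! t \<in> set y" using t(1) by auto
  then have "x ! t \<in> {1..k}" "y ! t \<in> {1..k}" using assms(1,2) by (auto simp: words_def)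
  ultimately show False using t(2,3) by (auto simp: phi_def G2_graph_def split: if_splits)
qed

lemma dist1_cov:
  assumes "x \<in> words {1..k} n" "y \<in> words {1..k} n" "distinguishable (G1_graph k d) x y"
    "cov d z x" "cov d z y"
  shows False
proof -
  obtain t where t: "t < min (length x) (length y)" "x ! t \<noteq> y ! t" "\<not> G1_graph k d (x ! t) (y ! t)"
    using assms(3) by (auto simp: distinguishable_def)
  have "x ! t \<in> set x" "y ! t \<in> set y" using t(1) by auto
  then have "x ! t \<in> {1..k}" "y ! t \<in> {1..k}" using assms(1,2) by (auto simp: words_def)
  then have "1 \<le> x!t \<and> x!t \<le> d" "1 \<le> y!t \<and> y!t \<le> d" using t(2,3) by (auto simp: G1_graph_def)
  then show False using cov_nth[OF assms(4)] cov_nth[OF assms(5)] t by auto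
qed

lemma card_words: "finite A \<Longrightarrow> card (words A n) = card A ^ n"
proof -
  assume "finite A"
  moreover have "words A n = {xs. set xs \<subseteq> A \<and> length xs = n}" by (auto simp: words_def)
  ultimately show ?thesis by (simp add: card_lists_length_eq)
qed

definition tup :: "nat \<Rightarrow> nat \<Rightarrow> nat \<Rightarrow> nat" where
  "tup i j = (\<lambda>l. if l = 0 then i else if l = 1 then j else 0)"

lemma tup_in: "i < m 0 \<Longrightarrow> j < m 1 \<Longrightarrow> tup i j \<in> msg_tuples 2 m"
  unfolding msg_tuples_def tup_def by (auto simp: less_2_cases_iff)

lemma converse_vector:
  fixes g :: real and d k :: nat
  assumes g: "0 < g" "g \<le> 1" "real (k - d + 1) powr g = real d"
    and dk: "1 \<le> d" "d \<le> k"
    and F: "feasible_vector {1..k} (two_users (G1_graph k d) (G2_graph d)) 2 n m"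
  shows "real (m 0) * real (m 1) powr g \<le> real d ^ n"
proof -
  obtain E where E: "\<forall>a\<in>msg_tuples 2 m. E a \<in> words {1..k} n"
    "\<forall>i<2. \<forall>a\<in>msg_tuples 2 m. \<forall>a'\<in>msg_tuples 2 m.
              a i \<noteq> a' i \<longrightarrow> distinguishable (two_users (G1_graph k d) (G2_graph d) i) (E a) (E a')"
    using F unfolding feasible_vector_def by blast
  have E1: "distinguishable (G1_graph k d) (E (tup i j)) (E (tup i' j'))"
    if "i < m 0" "j < m 1" "i' < m 0" "j' < m 1" "i \<noteq> i'" for i j i' j'
    using E(2) tup_in that by (fastforce simp: two_users_def tup_def)
  have E2: "distinguishable (G2_graph d) (E (tup i j)) (E (tup i' j'))"
    if "i < m 0" "j < m 1" "i' < m 0" "j' < m 1" "j \<noteq> j'" for i j i' j'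
  proof -
    have "(1::nat) < 2" by simp
    then show ?thesis using E(2) tup_in[OF that(1,2)] tup_in[OF that(3,4)] that(5)
      by (fastforce simp: two_users_def tup_def)
  qed
  have EW: "E (tup i j) \<in> words {1..k} n" if "i < m 0" "j < m 1" for i j
    using E(1) tup_in that by blast
  define Row where "Row i = (\<lambda>j. E (tup i j)) ` {..<m 1}" for i
  have RW: "Row i \<subseteq> words {1..k} n" if "i < m 0" for i using EW that by (auto simp: Row_def)
  have cardRow: "card (map (phi d) ` Row i) = m 1" if "i < m 0" for i
  proof -
    have "map (phi d) ` Row i = (\<lambda>j. map (phi d) (E (tup i j))) ` {..<m 1}"
      by (auto simp: Row_def image_image)
    moreover have "inj_on (\<lambda>j. map (phi d) (E (tup i j))) {..<m 1}"
      using dist2_phi EW E2 that by (auto simp: inj_on_def) (meson lessThan_iff)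
    ultimately show ?thesis by (simp add: card_image)
  qed
  have lb: "real (m 1) powr g \<le> real (card (sh d (Row i)))" if "i < m 0" for i
    using shadow_bound[OF g(1,2) _ g(3)[unfolded of_nat_add of_nat_diff[OF dk(2)]] dk RW[OF that]]
      cardRow[OF that] dk by (simp add: of_nat_diff)
  have disj: "sh d (Row i) \<inter> sh d (Row i') = {}" if "i < m 0" "i' < m 0" "i \<noteq> i'" for i i'
  proof (rule ccontr)
    assume "sh d (Row i) \<inter> sh d (Row i') \<noteq> {}"
    then obtain z j j' where "j < m 1" "j' < m 1" "cov d z (E (tup i j))" "cov d z (E (tup i' j'))"
      by (auto simp: sh_def Row_def)
    then show False using dist1_cov EW E1 that by blast
  qed
  have "real (m 0) * real (m 1) powr g = (\<Sum>i<m 0. real (m 1) powr g)" by simp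
  also have "\<dots> \<le> (\<Sum>i<m 0. real (card (sh d (Row i))))" using lb by (intro sum_mono) auto
  also have "\<dots> = real (card (\<Union>i<m 0. sh d (Row i)))"
    by (subst card_UN_disjoint) (auto intro: finite_sh[OF RW] dest: disj)
  also have "\<dots> \<le> real (card (words {1..d} n))"
  proof (intro of_nat_mono card_mono finite_words)
    show "(\<Union>i<m 0. sh d (Row i)) \<subseteq> words {1..d} n"
      using sh_words[OF RW] by blast
  qed simp
  also have "\<dots> = real d ^ n" by (simp add: card_words)
  finally show ?thesis .
qed

lemma rate_bound:
  fixes g :: real and d k :: nat
  assumes g: "0 < g" "g \<le> 1" "real (k - d + 1) powr g = real d"
    and dk: "1 \<le> d" "d \<le> k"
    and F: "feasible_rate {1..k} (two_users (G1_graph k d) (G2_graph d)) 2 (rate2 R1 R2)"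
  shows "R1 + g * R2 \<le> log 2 (real d)"
proof -
  obtain m where m: "\<forall>\<^sub>F n in sequentially. feasible_vector {1..k} (two_users (G1_graph k d) (G2_graph d)) 2 n (m n)"
    "\<forall>i<2. (\<lambda>n. log 2 (real (m n i)) / real n) \<longlonglongrightarrow> rate2 R1 R2 i"
    using F unfolding feasible_rate_def by blast
  have l0: "(\<lambda>n. log 2 (real (m n 0)) / real n) \<longlonglongrightarrow> R1" using m(2)[rule_format, of 0] by (auto simp: rate2_def)
  have l1: "(\<lambda>n. log 2 (real (m n 1)) / real n) \<longlonglongrightarrow> R2"
    using m(2)[rule_format, of 1] by (auto simp: rate2_def)
  have lim: "(\<lambda>n. log 2 (real (m n 0)) / real n + g * (log 2 (real (m n 1)) / real n)) \<longlonglongrightarrow> R1 + g * R2"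
    by (intro tendsto_intros l0 l1)
  have ev: "\<forall>\<^sub>F n in sequentially. log 2 (real (m n 0)) / real n + g * (log 2 (real (m n 1)) / real n) \<le> log 2 (real d)"
    using m(1) eventually_gt_at_top[of 0]
  proof eventually_elim
    case (elim n)
    have p: "m n 0 \<ge> 1" "m n 1 \<ge> 1" using elim(1) unfolding feasible_vector_def by auto
    have cv: "real (m n 0) * real (m n 1) powr g \<le> real d ^ n"
      by (rule converse_vector[OF g dk elim(1)])
    have pos: "0 < real (m n 0) * real (m n 1) powr g" using p by simp
    have "log 2 (real (m n 0)) + g * log 2 (real (m n 1)) = log 2 (real (m n 0) * real (m n 1) powr g)"
      using p by (simp add: log_mult log_powr)
    also have "\<dots> \<le> log 2 (real d ^ n)" using cv pos by (intro log_mono) auto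
    also have "\<dots> = real n * log 2 (real d)" by (simp add: log_nat_power)
    finally have "log 2 (real (m n 0)) + g * log 2 (real (m n 1)) \<le> real n * log 2 (real d)" .
    then have "(log 2 (real (m n 0)) + g * log 2 (real (m n 1))) / real n \<le> log 2 (real d)"
      using elim(2) by (simp add: divide_le_eq mult.commute)
    then show ?case by (simp add: add_divide_distrib)
  qed
  show ?thesis by (rule tendsto_upperbound[OF lim ev]) simp
qed

lemma enc_inj:
  fixes b :: nat
  assumes "0 < b"
  shows "x < b ^ len \<Longrightarrow> y < b ^ len \<Longrightarrow> x \<noteq> y \<Longrightarrow> \<exists>i<len. x div b ^ i mod b \<noteq> y div b ^ i mod b"
proof (induction len arbitrary: x y)
  case 0 then show ?case by simp
next
  case (Suc len)
  show ?case
  proof (cases "x mod b = y mod b")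
    case False then show ?thesis by (intro exI[of _ 0]) auto
  next
    case True
    have "x div b \<noteq> y div b"
      using True Suc.prems(3) by (metis div_mult_mod_eq)
    moreover have "x div b < b ^ len" "y div b < b ^ len"
      using Suc.prems(1,2) assms by (auto simp: div_less_iff_less_mult mult.commute)
    ultimately obtain i where "i < len" "x div b div b ^ i mod b \<noteq> y div b div b ^ i mod b"
      using Suc.IH by blast
    then show ?thesis by (intro exI[of _ "Suc i"]) (auto simp: div_mult2_eq)
  qed
qed

lemma pfrac:
  fixes \<alpha> :: real assumes "0 \<le> \<alpha>"
  shows "(\<lambda>n. real (nat \<lfloor>\<alpha> * real n\<rfloor>) / real n) \<longlonglongrightarrow> \<alpha>"
proof (rule tendsto_sandwich[of "\<lambda>n. \<alpha> - 1 / real n" _ _ "\<lambda>_. \<alpha>"])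
  have e: "real (nat \<lfloor>\<alpha> * real n\<rfloor>) = real_of_int \<lfloor>\<alpha> * real n\<rfloor>" for n
    using assms by simp
  show "\<forall>\<^sub>F n in sequentially. \<alpha> - 1 / real n \<le> real (nat \<lfloor>\<alpha> * real n\<rfloor>) / real n"
    using eventually_gt_at_top[of 0]
  proof eventually_elim
    case (elim n)
    have "\<alpha> * real n - 1 \<le> real_of_int \<lfloor>\<alpha> * real n\<rfloor>" by linarith
    then have "(\<alpha> * real n - 1) / real n \<le> real_of_int \<lfloor>\<alpha> * real n\<rfloor> / real n"
      using elim by (intro divide_right_mono) auto
    then show ?case using elim by (simp add: e diff_divide_distrib)
  qed
  show "\<forall>\<^sub>F n in sequentially. real (nat \<lfloor>\<alpha> * real n\<rfloor>) / real n \<le> \<alpha>"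
    using eventually_gt_at_top[of 0]
  proof eventually_elim
    case (elim n)
    have "real_of_int \<lfloor>\<alpha> * real n\<rfloor> \<le> \<alpha> * real n" by linarith
    then have "real_of_int \<lfloor>\<alpha> * real n\<rfloor> / real n \<le> \<alpha> * real n / real n"
      using elim by (intro divide_right_mono) auto
    then show ?case using elim by (simp add: e)
  qed
  show "(\<lambda>n. \<alpha> - 1 / real n) \<longlonglongrightarrow> \<alpha>"
    using tendsto_diff[OF tendsto_const lim_1_over_n, of \<alpha>] by simp
qed simp

definition code :: "nat \<Rightarrow> nat \<Rightarrow> nat \<Rightarrow> nat \<Rightarrow> (nat \<Rightarrow> nat) \<Rightarrow> nat list" where
  "code d qn P N a = map (\<lambda>i. Suc (a 0 div d ^ i mod d)) [0..<P]
     @ map (\<lambda>i. let r = a 1 div qn ^ i mod qn in if r = 0 then 1 else d + r) [0..<N]"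

lemma mt: assumes "a \<in> msg_tuples 2 m" shows "a 0 < m 0" "a 1 < m 1"
proof -
  have h: "\<forall>i<2. a i < m i" using assms by (simp add: msg_tuples_def)
  have "(0::nat) < 2" "(1::nat) < 2" by simp_all
  then show "a 0 < m 0" "a 1 < m 1" using h by blast+
qed

lemma vec:
  fixes d k P N :: nat
  assumes dk: "2 \<le> d" "d \<le> k" and n: "n = P + N"
  shows "feasible_vector {1..k} (two_users (G1_graph k d) (G2_graph d)) 2 n
           (\<lambda>i. if i = 0 then d ^ P else (k - d + 1) ^ N)"
proof -
  define qn where "qn = k - d + 1"
  have qpos: "0 < qn" by (simp add: qn_def)
  have dpos: "0 < d" using dk by simp
  let ?m = "\<lambda>i::nat. if i = 0 then d ^ P else (k - d + 1) ^ N"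
  have len: "length (code d qn P N a) = n" for a by (simp add: code_def n)
  have W: "code d qn P N a \<in> words {1..k} n" for a
  proof -
    have "set (code d qn P N a) \<subseteq> {1..k}"
    proof
      fix c assume "c \<in> set (code d qn P N a)"
      then consider (A) i where "c = Suc (a 0 div d ^ i mod d)"
        | (B) i where "c = (let r = a 1 div qn ^ i mod qn in if r = 0 then 1 else d + r)"
        by (auto simp: code_def)
      then show "c \<in> {1..k}"
      proof cases
        case (A i)
        have "a 0 div d ^ i mod d < d" using dpos by simp
        then have "Suc (a 0 div d ^ i mod d) \<le> k" using dk by linarith
        then show ?thesis using A by auto
      next
        case (B i)
        have "a 1 div qn ^ i mod qn < qn" using qpos by simp
        then have "d + a 1 div qn ^ i mod qn \<le> k" using dk unfolding qn_def by linarith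
        then show ?thesis using B dk by (auto simp: Let_def)
      qed
    qed
    then show ?thesis using len by (simp add: words_def)
  qed
  have D0: "distinguishable (G1_graph k d) (code d qn P N a) (code d qn P N a')"
    if A: "a \<in> msg_tuples 2 ?m" "a' \<in> msg_tuples 2 ?m" "a 0 \<noteq> a' 0" for a a'
  proof -
    have "a 0 < ?m 0" "a' 0 < ?m 0" using mt[OF A(1)] mt[OF A(2)] by simp_all
    then have "a 0 < d ^ P" "a' 0 < d ^ P" by (simp_all add: qn_def)
    then obtain i where i: "i < P" "a 0 div d ^ i mod d \<noteq> a' 0 div d ^ i mod d"
      using enc_inj[OF dpos] A(3) by blast
    have x: "code d qn P N a ! i = Suc (a 0 div d ^ i mod d)" "code d qn P N a' ! i = Suc (a' 0 div d ^ i mod d)"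
      using i(1) by (auto simp: code_def nth_append)
    have lt: "Suc (a 0 div d ^ i mod d) \<le> d" "Suc (a' 0 div d ^ i mod d) \<le> d"
      using dpos by (simp_all add: Suc_le_eq)
    have "\<not> G1_graph k d (code d qn P N a ! i) (code d qn P N a' ! i)"
      unfolding x G1_graph_def using lt by auto
    moreover have "code d qn P N a ! i \<noteq> code d qn P N a' ! i" using x i by simp
    ultimately show ?thesis unfolding distinguishable_def using i len n
      by (intro exI[of _ i]) auto
  qed
  have D1: "distinguishable (G2_graph d) (code d qn P N a) (code d qn P N a')"
    if A: "a \<in> msg_tuples 2 ?m" "a' \<in> msg_tuples 2 ?m" "a 1 \<noteq> a' 1" for a a'
  proof -
    have "a 1 < ?m 1" "a' 1 < ?m 1" using mt[OF A(1)] mt[OF A(2)] by simp_all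
    then have "a 1 < qn ^ N" "a' 1 < qn ^ N" by (simp_all add: qn_def)
    then obtain i where i: "i < N" "a 1 div qn ^ i mod qn \<noteq> a' 1 div qn ^ i mod qn"
      using enc_inj[OF qpos] A(3) by blast
    define r where "r = a 1 div qn ^ i mod qn"
    define r' where "r' = a' 1 div qn ^ i mod qn"
    have x: "code d qn P N a ! (P + i) = (if r = 0 then 1 else d + r)"
       "code d qn P N a' ! (P + i) = (if r' = 0 then 1 else d + r')"
      using i(1) by (auto simp: code_def nth_append r_def r'_def Let_def)
    have "r \<noteq> r'" using i(2) by (simp add: r_def r'_def)
    then show ?thesis unfolding distinguishable_def using i x len n dk
      by (intro exI[of _ "P + i"]) (auto simp: G2_graph_def)
  qed
  show ?thesis unfolding feasible_vector_def
  proof (intro conjI exI[of _ "code d qn P N"])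
    show "\<forall>i<2. 1 \<le> ?m i" using dk by auto
    show "\<forall>a\<in>msg_tuples 2 ?m. code d qn P N a \<in> words {1..k} n" using W by blast
    show "\<forall>i<2. \<forall>a\<in>msg_tuples 2 ?m. \<forall>a'\<in>msg_tuples 2 ?m.
        a i \<noteq> a' i \<longrightarrow> distinguishable (two_users (G1_graph k d) (G2_graph d) i) (code d qn P N a) (code d qn P N a')"
      using D0 D1 by (auto simp: two_users_def less_2_cases_iff)
  qed
qed

lemma achievable:
  fixes d k :: nat and \<alpha> :: real
  assumes dk: "2 \<le> d" "d \<le> k" and a: "0 \<le> \<alpha>" "\<alpha> \<le> 1"
  shows "feasible_rate {1..k} (two_users (G1_graph k d) (G2_graph d)) 2
           (rate2 (\<alpha> * log 2 (real d)) ((1 - \<alpha>) * log 2 (real (k - d + 1))))"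
proof -
  define P where "P n = nat \<lfloor>\<alpha> * real n\<rfloor>" for n
  have Pn: "P n \<le> n" for n
  proof -
    have "\<alpha> * real n \<le> real n" using a by (simp add: mult_left_le_one_le)
    then have "\<lfloor>\<alpha> * real n\<rfloor> \<le> int n" by linarith
    then show ?thesis by (simp add: P_def)
  qed
  define m where "m n = (\<lambda>i::nat. if i = 0 then d ^ P n else (k - d + 1) ^ (n - P n))" for n
  have pf: "(\<lambda>n. real (P n) / real n) \<longlonglongrightarrow> \<alpha>" unfolding P_def by (rule pfrac[OF a(1)])
  have L0: "(\<lambda>n. log 2 (real (m n 0)) / real n) \<longlonglongrightarrow> \<alpha> * log 2 (real d)"
  proof -
    have e: "log 2 (real (m n 0)) / real n = real (P n) / real n * log 2 (real d)" for n
    proof -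
      have "log 2 (real (m n 0)) = real (P n) * log 2 (real d)" by (simp add: m_def log_nat_power)
      then show ?thesis by simp
    qed
    show ?thesis unfolding e by (intro tendsto_intros pf)
  qed
  have L1: "(\<lambda>n. log 2 (real (m n 1)) / real n) \<longlonglongrightarrow> (1 - \<alpha>) * log 2 (real (k - d + 1))"
  proof -
    have "(\<lambda>n. (1 - real (P n) / real n) * log 2 (real (k - d + 1))) \<longlonglongrightarrow> (1 - \<alpha>) * log 2 (real (k - d + 1))"
      by (intro tendsto_intros pf)
    moreover have "\<forall>\<^sub>F n in sequentially. (1 - real (P n) / real n) * log 2 (real (k - d + 1))
        = log 2 (real (m n 1)) / real n"
      using eventually_gt_at_top[of 0]
    proof eventually_elim
      case (elim n)
      have "log 2 (real (m n 1)) = real (n - P n) * log 2 (real (k - d + 1))"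
        unfolding m_def by (simp add: log_nat_power del: of_nat_add of_nat_Suc)
      also have "\<dots> = (real n - real (P n)) * log 2 (real (k - d + 1))"
        using Pn[of n] by (simp add: of_nat_diff)
      finally show ?case using elim by (simp add: field_simps)
    qed
    ultimately show ?thesis by (rule Lim_transform_eventually)
  qed
  show ?thesis unfolding feasible_rate_def
  proof (intro exI[of _ m] conjI)
    show "\<forall>\<^sub>F n in sequentially. feasible_vector {1..k} (two_users (G1_graph k d) (G2_graph d)) 2 n (m n)"
    proof (intro always_eventually allI)
      fix n
      show "feasible_vector {1..k} (two_users (G1_graph k d) (G2_graph d)) 2 n (m n)"
        unfolding m_def by (rule vec[OF dk]) (use Pn[of n] in simp)
    qed
    show "\<forall>i<2. (\<lambda>n. log 2 (real (m n i)) / real n) \<longlonglongrightarrow>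
          rate2 (\<alpha> * log 2 (real d)) ((1 - \<alpha>) * log 2 (real (k - d + 1))) i"
      using L0 L1 by (auto simp: rate2_def less_2_cases_iff)
  qed
qed

theorem theorem8:
  fixes d k :: nat and \<alpha> :: real
  assumes "2 \<le> d" and "real d \<le> (real k + 1) / 2"
    and "0 \<le> \<alpha>" and "\<alpha> \<le> 1"
  shows "optimal2 {1..k} (G1_graph k d) (G2_graph d)
           (\<alpha> * log 2 (real d)) ((1 - \<alpha>) * log 2 (real (k - d + 1)))"
proof -
  have "real (2 * d) \<le> real (k + 1)" using assms(2) by simp
  then have dk2: "2 * d \<le> k + 1" by (simp only: of_nat_le_iff)
  have dk: "d \<le> k" "2 * d \<le> k + 1" using dk2 assms(1) by linarith+
  define q where "q = real (k - d + 1)"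
  have qd: "real d \<le> q" using dk by (simp add: q_def of_nat_diff)
  have d2: "1 < real d" using assms(1) by simp
  have ld: "0 < log 2 (real d)" using d2 by simp
  have lq: "log 2 (real d) \<le> log 2 q" using qd d2 by simp
  define g where "g = log 2 (real d) / log 2 q"
  have g0: "0 < g" using ld lq by (simp add: g_def)
  have g1: "g \<le> 1" using ld lq by (simp add: g_def)
  have gq: "g * log 2 q = log 2 (real d)" using ld lq by (simp add: g_def)
  have qpow: "q powr g = real d"
  proof -
    have "q powr g = exp (g * ln q)" using qd d2 by (simp add: powr_def)
    also have "g * ln q = ln (real d)"
      using gq by (simp add: log_def field_simps)
    finally show ?thesis using d2 by simp
  qed
  have qpow': "real (k - d + 1) powr g = real d" using qpow by (simp add: q_def)
  have d1: "1 \<le> d" using assms(1) by simp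
  show ?thesis unfolding optimal2_def
  proof (intro conjI notI)
    show "feasible_rate {1..k} (two_users (G1_graph k d) (G2_graph d)) 2
           (rate2 (\<alpha> * log 2 (real d)) ((1 - \<alpha>) * log 2 (real (k - d + 1))))"
      by (rule achievable[OF assms(1) dk(1) assms(3,4)])
  next
    assume "\<exists>R1'. \<alpha> * log 2 (real d) < R1' \<and> feasible_rate {1..k} (two_users (G1_graph k d) (G2_graph d)) 2
           (rate2 R1' ((1 - \<alpha>) * log 2 (real (k - d + 1))))"
    then obtain R1' where R: "\<alpha> * log 2 (real d) < R1'" "feasible_rate {1..k} (two_users (G1_graph k d) (G2_graph d)) 2
           (rate2 R1' ((1 - \<alpha>) * log 2 (real (k - d + 1))))" by blast
    have "R1' + g * ((1 - \<alpha>) * log 2 (real (k - d + 1))) \<le> log 2 (real d)"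
      by (rule rate_bound[OF g0 g1 qpow' d1 dk(1) R(2)])
    moreover have "g * ((1 - \<alpha>) * log 2 (real (k - d + 1))) = (1 - \<alpha>) * log 2 (real d)"
      using gq by (simp add: q_def algebra_simps)
    ultimately show False using R(1) by (simp add: algebra_simps)
  next
    assume "\<exists>R2'. (1 - \<alpha>) * log 2 (real (k - d + 1)) < R2' \<and> feasible_rate {1..k} (two_users (G1_graph k d) (G2_graph d)) 2
           (rate2 (\<alpha> * log 2 (real d)) R2')"
    then obtain R2' where R: "(1 - \<alpha>) * log 2 (real (k - d + 1)) < R2'" "feasible_rate {1..k} (two_users (G1_graph k d) (G2_graph d)) 2
           (rate2 (\<alpha> * log 2 (real d)) R2')" by blast
    have b: "\<alpha> * log 2 (real d) + g * R2' \<le> log 2 (real d)"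
      by (rule rate_bound[OF g0 g1 qpow' d1 dk(1) R(2)])
    have "g * ((1 - \<alpha>) * log 2 (real (k - d + 1))) < g * R2'"
      using R(1) g0 by simp
    moreover have "g * ((1 - \<alpha>) * log 2 (real (k - d + 1))) = (1 - \<alpha>) * log 2 (real d)"
      using gq by (simp add: q_def algebra_simps)
    ultimately show False using b by (simp add: algebra_simps)
  qed
qed

end
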